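(* Let $C=L_1;\ldots;L_d$ be a sorting network on $n$ channels of depth $d\ge2$ whose last layer is in last layer normal form. Let $i<j$ be two channels that are both unused in layer $L_{d-1}$ and that belong to different blocks of $C$. Then the network obtained from $C$ by adding the comparator $(i,j)$ to layer $L_{d-1}$ is still a sorting network.
   Context: Channels are numbered $1,\ldots,n$. A comparator network of depth $d$ is a sequence $C=L_1;\ldots;L_d$ of layers; each layer is a set of comparators $(i,j)$ with $1\le i<j\le n$, each channel occurring in at most one comparator of a layer. An input $\bar x\in\{0,1\}^n$ propagates: $\bar x_0=\bar x$, and $\bar x_k$ is obtained from $\bar x_{k-1}$ by, for each $(i,j)\in L_k$, putting the minimum of the values at positions $i,j$ at position $i$ and the maximum at position $j$. The output is $C(\bar x)=\bar x_d$; $C$ is a sorting network if $C(\bar x)$ is sorted non-decreasingly for all $\bar x\in\{0,1\}^n$. A channel is used in a layer if it occurs in some comparator of that layer. The last layer $L_d$ is in last layer normal form if every comparator of $L_d$ is of the form $(i,i+1)$ and there is no $i<n$ with both $i$ and $i+1$ unused in $L_d$. The blocks of $C$ are the vertex sets of the connected components of the graph on $\{1,\ldots,n\}$ with an edge $\{i,j\}$ for each comparator $(i,j)\in L_d$. *)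

theory Defs
  imports Main
begin

(* Channels are natural numbers 1..n. A comparator is a pair (i,j) with i<j.
   A layer is a set of comparators; a network is a list of layers [L_1,...,L_d]. *)

type_synonym comparator = "nat \<times> nat"
type_synonym layer = "comparator set"
type_synonym network = "layer list"

definition is_layer :: "nat \<Rightarrow> layer \<Rightarrow> bool" where
  "is_layer n L \<longleftrightarrow>
     (\<forall>(i,j)\<in>L. 1 \<le> i \<and> i < j \<and> j \<le> n) \<and>
     (\<forall>c\<in>L. \<forall>c'\<in>L. c \<noteq> c' \<longrightarrow>
        {fst c, snd c} \<inter> {fst c', snd c'} = {})"

definition is_network :: "nat \<Rightarrow> network \<Rightarrow> bool" where
  "is_network n C \<longleftrightarrow> (\<forall>L\<in>set C. is_layer n L)"

(* Binary inputs: functions from channels to bool (False = 0, True = 1);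
   only the values on channels 1..n matter. *)
definition apply_layer :: "layer \<Rightarrow> (nat \<Rightarrow> bool) \<Rightarrow> (nat \<Rightarrow> bool)" where
  "apply_layer L x = (\<lambda>k.
     if \<exists>j. (k,j) \<in> L then min (x k) (x (THE j. (k,j) \<in> L))
     else if \<exists>i. (i,k) \<in> L then max (x (THE i. (i,k) \<in> L)) (x k)
     else x k)"

definition run :: "network \<Rightarrow> (nat \<Rightarrow> bool) \<Rightarrow> (nat \<Rightarrow> bool)" where
  "run C x = fold apply_layer C x"

definition sorted_on :: "nat \<Rightarrow> (nat \<Rightarrow> bool) \<Rightarrow> bool" where
  "sorted_on n y \<longleftrightarrow> (\<forall>i j. 1 \<le> i \<longrightarrow> i \<le> j \<longrightarrow> j \<le> n \<longrightarrow> y i \<le> y j)"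

definition sorting_network :: "nat \<Rightarrow> network \<Rightarrow> bool" where
  "sorting_network n C \<longleftrightarrow> is_network n C \<and> (\<forall>x. sorted_on n (run C x))"

definition used :: "layer \<Rightarrow> nat \<Rightarrow> bool" where
  "used L k \<longleftrightarrow> (\<exists>c\<in>L. k = fst c \<or> k = snd c)"

definition last_layer_nf :: "nat \<Rightarrow> layer \<Rightarrow> bool" where
  "last_layer_nf n L \<longleftrightarrow>
     (\<forall>(i,j)\<in>L. j = i + 1) \<and>
     \<not> (\<exists>i. 1 \<le> i \<and> i < n \<and> \<not> used L i \<and> \<not> used L (i+1))"

definition same_block :: "network \<Rightarrow> nat \<Rightarrow> nat \<Rightarrow> bool" where
  "same_block C i j \<longleftrightarrow> (i, j) \<in> (last C \<union> (last C)\<inverse>)\<^sup>*"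

end

theory Submission
  imports Defs
begin

lemma unused_apply: "\<not> used L k \<Longrightarrow> apply_layer L x k = x k"
  unfolding apply_layer_def used_def by force

lemma layer_disj: "is_layer n L \<Longrightarrow> c \<in> L \<Longrightarrow> c' \<in> L \<Longrightarrow> c \<noteq> c' \<Longrightarrow>
  {fst c, snd c} \<inter> {fst c', snd c'} = {}"
  unfolding is_layer_def by blast

lemma layer_fst: "is_layer n L \<Longrightarrow> (a,b) \<in> L \<Longrightarrow> (a,c) \<in> L \<Longrightarrow> c = b"
  using layer_disj[of n L "(a,b)" "(a,c)"] by auto

lemma layer_snd: "is_layer n L \<Longrightarrow> (a,b) \<in> L \<Longrightarrow> (c,b) \<in> L \<Longrightarrow> c = a"
  using layer_disj[of n L "(a,b)" "(c,b)"] by auto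

lemma layer_not_both: "is_layer n L \<Longrightarrow> (a,b) \<in> L \<Longrightarrow> (b,c) \<in> L \<Longrightarrow> False"
  using layer_disj[of n L "(a,b)" "(b,c)"] by (cases "a = b") (auto simp: is_layer_def)

lemma apply_min: "is_layer n L \<Longrightarrow> (a,b) \<in> L \<Longrightarrow> apply_layer L x a = min (x a) (x b)"
proof -
  assume l: "is_layer n L" and ab: "(a,b) \<in> L"
  have "(THE j. (a,j) \<in> L) = b" using l ab layer_fst by blast
  thus ?thesis using ab unfolding apply_layer_def by auto
qed

lemma apply_max: "is_layer n L \<Longrightarrow> (a,b) \<in> L \<Longrightarrow> apply_layer L x b = max (x a) (x b)"
proof -
  assume l: "is_layer n L" and ab: "(a,b) \<in> L"
  have "(THE i. (i,b) \<in> L) = a" using l ab layer_snd by blast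
  moreover have "\<not> (\<exists>j. (b,j) \<in> L)" using l ab layer_not_both by blast
  ultimately show ?thesis using ab unfolding apply_layer_def by auto
qed

lemma insert_same:
  assumes "\<not> used L i" "\<not> used L j" "i < j" "x i \<le> x j"
  shows "apply_layer (insert (i,j) L) x = apply_layer L x"
proof
  fix k
  have ni: "\<And>c. (i,c) \<notin> L" "\<And>c. (c,i) \<notin> L" "\<And>c. (j,c) \<notin> L" "\<And>c. (c,j) \<notin> L"
    using assms(1,2) unfolding used_def by force+
  show "apply_layer (insert (i,j) L) x k = apply_layer L x k"
  proof (cases "k = i")
    case True
    have "(THE c. (i,c) \<in> insert (i,j) L) = j" using ni by auto
    thus ?thesis using True assms ni unfolding apply_layer_def by (auto simp: min_def)
  next
    case ki: False
    show ?thesis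
    proof (cases "k = j")
      case True
      have "(THE c. (c,j) \<in> insert (i,j) L) = i" using ni by auto
      moreover have "\<not> (\<exists>c. (j,c) \<in> insert (i,j) L)" using ni assms(3) by auto
      ultimately show ?thesis using True assms ni unfolding apply_layer_def by (auto simp: max_def)
    next
      case False
      have "\<And>c. (k,c) \<in> insert (i,j) L \<longleftrightarrow> (k,c) \<in> L" "\<And>c. (c,k) \<in> insert (i,j) L \<longleftrightarrow> (c,k) \<in> L"
        using ki False by auto
      then show ?thesis unfolding apply_layer_def by simp
    qed
  qed
qed

lemma run_split:
  assumes "length C = d" "d \<ge> 2"
  shows "run C x = apply_layer (C!(d-1)) (apply_layer (C!(d-2)) (run (take (d-2) C) x))"
proof -
  have "drop (d-2) C = [C!(d-2), C!(d-1)]"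
  proof -
    have e1: "Suc (d-2) = d-1" "Suc (d-1) = d" using assms(2) by auto
    have "drop (d-2) C = C!(d-2) # drop (d-1) C"
      using Cons_nth_drop_Suc[of "d-2" C] assms e1 by auto
    moreover have "drop (d-1) C = C!(d-1) # drop d C"
      using Cons_nth_drop_Suc[of "d-1" C] assms e1 by auto
    ultimately show ?thesis using assms by simp
  qed
  hence "C = take (d-2) C @ [C!(d-2), C!(d-1)]" by (metis append_take_drop_id)
  hence "run C x = fold apply_layer (take (d-2) C @ [C!(d-2), C!(d-1)]) x"
    unfolding run_def by metis
  thus ?thesis unfolding run_def by simp
qed

lemma up1: "is_layer n L \<Longrightarrow> last_layer_nf n L \<Longrightarrow> z k \<Longrightarrow>
   apply_layer L z k \<or> ((k,k+1) \<in> L \<and> apply_layer L z (k+1))"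
proof -
  assume l: "is_layer n L" and nf: "last_layer_nf n L" and zk: "z k"
  show ?thesis
  proof (cases "\<exists>c. (k,c) \<in> L")
    case True
    then obtain c where c: "(k,c) \<in> L" by blast
    hence "c = k+1" using nf unfolding last_layer_nf_def by auto
    thus ?thesis using apply_max[OF l c] zk c by auto
  next
    case False
    show ?thesis
    proof (cases "\<exists>c. (c,k) \<in> L")
      case True
      then obtain c where c: "(c,k) \<in> L" by blast
      thus ?thesis using apply_max[OF l c] zk by auto
    next
      case F2: False
      thus ?thesis using False zk unfolding apply_layer_def by auto
    qed
  qed
qed

lemma down1: "is_layer n L \<Longrightarrow> last_layer_nf n L \<Longrightarrow> \<not> z k \<Longrightarrow>
   \<not> apply_layer L z k \<or> ((k-1,k) \<in> L \<and> \<not> apply_layer L z (k-1))"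
proof -
  assume l: "is_layer n L" and nf: "last_layer_nf n L" and zk: "\<not> z k"
  show ?thesis
  proof (cases "\<exists>c. (k,c) \<in> L")
    case True
    then obtain c where c: "(k,c) \<in> L" by blast
    thus ?thesis using apply_min[OF l c] zk by auto
  next
    case False
    show ?thesis
    proof (cases "\<exists>c. (c,k) \<in> L")
      case True
      then obtain c where c: "(c,k) \<in> L" by blast
      hence "k = c+1" using nf unfolding last_layer_nf_def by auto
      thus ?thesis using apply_min[OF l c] zk c by auto
    next
      case F2: False
      thus ?thesis using False zk unfolding apply_layer_def by auto
    qed
  qed
qed

theorem lemma7:
  fixes n d :: nat and C :: network and i j :: nat
  assumes "sorting_network n C"
    and "length C = d" and "d \<ge> 2"
    and "last_layer_nf n (C ! (d - 1))"
    and "1 \<le> i" and "i < j" and "j \<le> n"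
    and "\<not> used (C ! (d - 2)) i" and "\<not> used (C ! (d - 2)) j"
    and "\<not> same_block C i j"
  shows "sorting_network n (C[d - 2 := insert (i, j) (C ! (d - 2))])"
proof -
  define L1 where "L1 = C ! (d-2)"
  define L2 where "L2 = C ! (d-1)"
  define C' where "C' = C[d - 2 := insert (i, j) L1]"
  have net: "is_network n C" and srt: "\<And>x. sorted_on n (run C x)"
    using assms(1) unfolding sorting_network_def by auto
  have lay1: "is_layer n L1" using net assms(2,3) unfolding L1_def is_network_def by auto
  have lay2: "is_layer n L2" using net assms(2,3) unfolding L2_def is_network_def by auto
  have nf: "last_layer_nf n L2" using assms(4) L2_def by simp
  have lastC: "last C = L2" unfolding L2_def using assms(2,3)
    by (metis last_conv_nth list.size(3) not_numeral_le_zero)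
  have lenC': "length C' = d" unfolding C'_def using assms(2) by simp
  have tk: "take (d-2) C' = take (d-2) C" unfolding C'_def by simp
  have n1: "C' ! (d-2) = insert (i,j) L1" unfolding C'_def using assms(2,3) by simp
  have n2: "C' ! (d-1) = L2" unfolding C'_def L2_def using assms(2,3) by simp
  have key: "run C' x = run C x" for x
  proof -
    define y where "y = run (take (d-2) C) x"
    define z where "z = apply_layer L1 y"
    define w where "w = apply_layer L2 z"
    have u8: "\<not> used L1 i" using assms(8) unfolding L1_def .
    have u9: "\<not> used L1 j" using assms(9) unfolding L1_def .
    have wr: "run C x = w"
      using run_split[OF assms(2,3), of x] unfolding w_def z_def y_def L1_def L2_def .
    have zi: "z i = y i" "z j = y j" unfolding z_def using unused_apply[OF u8] unused_apply[OF u9] by auto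
    have "y i \<le> y j"
    proof (rule ccontr)
      assume "\<not> y i \<le> y j"
      hence a: "z i" and b: "\<not> z j" using zi by auto
      have s: "sorted_on n w" using srt[of x] wr by simp
      have nsb: "(i,i+1) \<in> L2 \<Longrightarrow> j \<noteq> i+1"
      proof
        assume "(i,i+1) \<in> L2" "j = i+1"
        hence "(i,j) \<in> last C" using lastC by simp
        hence "(i,j) \<in> (last C \<union> (last C)\<inverse>)\<^sup>*" by (intro r_into_rtrancl UnI1)
        thus False using assms(10) unfolding same_block_def by simp
      qed
      have so: "\<And>p q. 1\<le>p \<Longrightarrow> p\<le>q \<Longrightarrow> q\<le>n \<Longrightarrow> w p \<Longrightarrow> w q"
      proof -
        fix p q assume "1\<le>p" "p\<le>q" "q\<le>n" "w p"
        hence "w p \<le> w q" using s unfolding sorted_on_def by blast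
        thus "w q" using \<open>w p\<close> by (simp add: le_bool_def)
      qed
      have U: "w i \<or> ((i,i+1) \<in> L2 \<and> w (i+1))" using up1[of n L2 z i, OF lay2 nf a] unfolding w_def .
      have D: "\<not> w j \<or> ((j-1,j) \<in> L2 \<and> \<not> w (j-1))" using down1[of n L2 z j, OF lay2 nf b] unfolding w_def .
      show False
      proof (cases "w i")
        case True
        show False using D
        proof
          assume "\<not> w j" thus False using so[of i j] True assms(5,6,7) by simp
        next
          assume "(j-1,j) \<in> L2 \<and> \<not> w (j-1)"
          thus False using so[of i "j-1"] True assms(5,6,7) by (simp add: less_imp_le_nat le_diff_conv2)
        qed
      next
        case False
        hence T: "(i,i+1) \<in> L2" "w (i+1)" using U by auto
        hence ne: "j \<noteq> i+1" using nsb by simp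
        have "j-1 \<le> n" using assms(7) by simp
        show False using D
        proof
          assume "\<not> w j" thus False using so[of "i+1" j] T assms(5,6,7) ne by simp
        next
          assume "(j-1,j) \<in> L2 \<and> \<not> w (j-1)"
          thus False using so[of "i+1" "j-1"] T assms(5,6,7) ne \<open>j-1 \<le> n\<close> by (simp add: le_diff_conv2)
        qed
      qed
    qed
    have "apply_layer (insert (i,j) L1) y = apply_layer L1 y"
      by (rule insert_same[OF u8 u9 assms(6) \<open>y i \<le> y j\<close>])
    thus ?thesis using run_split[OF lenC' assms(3)] run_split[OF assms(2,3)] tk n1 n2
      unfolding y_def L1_def L2_def by simp
  qed
  have nu: "\<And>c. c \<in> L1 \<Longrightarrow> fst c \<noteq> i \<and> snd c \<noteq> i \<and> fst c \<noteq> j \<and> snd c \<noteq> j"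
    using assms(8,9) unfolding used_def L1_def by blast
  have "is_layer n (insert (i,j) L1)"
    unfolding is_layer_def
  proof (intro conjI ballI impI)
    fix c assume "c \<in> insert (i,j) L1"
    thus "case c of (a,b) \<Rightarrow> 1 \<le> a \<and> a < b \<and> b \<le> n"
      using lay1 assms(5,6,7) unfolding is_layer_def by auto
  next
    fix c c' assume c: "c \<in> insert (i,j) L1" and c': "c' \<in> insert (i,j) L1" and ne: "c \<noteq> c'"
    show "{fst c, snd c} \<inter> {fst c', snd c'} = {}"
    proof (cases "c = (i,j)")
      case True
      hence "c' \<in> L1" using c' ne by auto
      thus ?thesis using nu[of c'] True by auto
    next
      case False
      hence cL: "c \<in> L1" using c by auto
      show ?thesis
      proof (cases "c' = (i,j)")
        case True thus ?thesis using nu[OF cL] by auto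
      next
        case False
        hence "c' \<in> L1" using c' by auto
        thus ?thesis using layer_disj[OF lay1 cL _ ne] by simp
      qed
    qed
  qed
  hence "is_network n C'" using net set_update_subset_insert[of C "d-2" "insert (i,j) L1"]
    unfolding is_network_def C'_def by blast
  moreover have "\<forall>x. sorted_on n (run C' x)" using key srt by simp
  ultimately have "sorting_network n C'" unfolding sorting_network_def by blast
  thus ?thesis unfolding C'_def L1_def .
qed

end
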